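(* Let $k_1,k_3,a_2,a_5$ be real constants with $(a_2,a_5)\neq(0,0)$, let $r=\sqrt{x^2+y^2}$, and consider the Newtonian system $\ddot x=-\partial_x V_5$, $\ddot y=-\partial_y V_5$ on the region where $r\neq 0$ and $a_2y-a_5x\neq0$, with potential $$V_5=\frac{k_1}{(a_2y-a_5x)^2}+\frac{k_3(a_2x+a_5y)}{r(a_2y-a_5x)^2}.$$ Let \begin{align*} \tilde J_3=&(x\dot y-y\dot x)^2(a_2\dot x+a_5\dot y)+\frac{2k_1r^2}{(a_2y-a_5x)^2}(a_2\dot x+a_5\dot y)+\frac{k_3r}{a_2y-a_5x}(a_2\dot y-a_5\dot x)\\ &-\frac{k_3(a_2x+a_5y)}{r(a_2y-a_5x)}(x\dot y-y\dot x)+\frac{2k_3(a_2x+a_5y)r}{(a_2y-a_5x)^2}(a_2\dot x+a_5\dot y). \end{align*} Then the time-dependent function $$J_5=-t\,\tilde J_3+(a_2x+a_5y)(x\dot y-y\dot x)^2+\frac{2k_1r^2(a_2x+a_5y)}{(a_2y-a_5x)^2}+\frac{2k_3r(a_2x+a_5y)^2}{(a_2y-a_5x)^2}+k_3r$$ is constant along every solution (as is $\tilde J_3$). *)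

theory Defs
  imports "HOL-Analysis.Analysis"
begin

definition rad :: "real \<Rightarrow> real \<Rightarrow> real" where
  "rad x y = sqrt (x^2 + y^2)"

definition V5 :: "real \<Rightarrow> real \<Rightarrow> real \<Rightarrow> real \<Rightarrow> real \<Rightarrow> real \<Rightarrow> real" where
  "V5 k1 k3 a2 a5 x y =
     k1 / (a2*y - a5*x)^2 + k3 * (a2*x + a5*y) / (rad x y * (a2*y - a5*x)^2)"

definition J3t :: "real \<Rightarrow> real \<Rightarrow> real \<Rightarrow> real \<Rightarrow> real \<Rightarrow> real \<Rightarrow> real \<Rightarrow> real \<Rightarrow> real" where
  "J3t k1 k3 a2 a5 x y xd yd =
     (x*yd - y*xd)^2 * (a2*xd + a5*yd)
     + 2*k1*(rad x y)^2 / (a2*y - a5*x)^2 * (a2*xd + a5*yd)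
     + k3 * rad x y / (a2*y - a5*x) * (a2*yd - a5*xd)
     - k3 * (a2*x + a5*y) / (rad x y * (a2*y - a5*x)) * (x*yd - y*xd)
     + 2*k3*(a2*x + a5*y) * rad x y / (a2*y - a5*x)^2 * (a2*xd + a5*yd)"

definition J5 :: "real \<Rightarrow> real \<Rightarrow> real \<Rightarrow> real \<Rightarrow> real \<Rightarrow> real \<Rightarrow> real \<Rightarrow> real \<Rightarrow> real \<Rightarrow> real" where
  "J5 k1 k3 a2 a5 t x y xd yd =
     - t * J3t k1 k3 a2 a5 x y xd yd
     + (a2*x + a5*y) * (x*yd - y*xd)^2
     + 2*k1*(rad x y)^2*(a2*x + a5*y) / (a2*y - a5*x)^2
     + 2*k3*rad x y*(a2*x + a5*y)^2 / (a2*y - a5*x)^2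
     + k3 * rad x y"

end

theory Submission
  imports Defs
begin

lemma rad_deriv[derivative_intros]:
  assumes f: "(f has_real_derivative f') (at t within S)"
    and g: "(g has_real_derivative g') (at t within S)"
    and nz: "rad (f t) (g t) \<noteq> 0"
    and D: "D = (f t * f' + g t * g') / rad (f t) (g t)"
  shows "((\<lambda>t. rad (f t) (g t)) has_real_derivative D) (at t within S)"
proof -
  have pos: "f t ^2 + g t ^2 > 0" using nz unfolding rad_def
    by (metis add_nonneg_nonneg less_eq_real_def real_sqrt_zero zero_le_power2)
  have h: "((\<lambda>t. f t ^2 + g t ^2) has_real_derivative 2*f t*f' + 2*g t*g') (at t within S)"
    by (auto intro!: derivative_eq_intros f g)
  have e: "inverse (sqrt (f t ^2 + g t ^2)) / 2 * (2*f t*f' + 2*g t*g') = D"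
    using nz pos unfolding D rad_def by (simp add: field_simps)
  show ?thesis unfolding rad_def
    using DERIV_chain2[OF DERIV_real_sqrt[OF pos] h] unfolding e .
qed

lemma rad_sq: "(rad x y)^2 = x^2 + y^2"
  unfolding rad_def by simp

definition Vx :: "real \<Rightarrow> real \<Rightarrow> real \<Rightarrow> real \<Rightarrow> real \<Rightarrow> real \<Rightarrow> real \<Rightarrow> real" where
  "Vx k1 k3 a2 a5 x y R = 2*k1*a5/(a2*y-a5*x)^3 + k3*(a2/(R*(a2*y-a5*x)^2) - (a2*x+a5*y)*x/(R^3*(a2*y-a5*x)^2)
        + 2*a5*(a2*x+a5*y)/(R*(a2*y-a5*x)^3))"

definition Vy :: "real \<Rightarrow> real \<Rightarrow> real \<Rightarrow> real \<Rightarrow> real \<Rightarrow> real \<Rightarrow> real \<Rightarrow> real" where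
  "Vy k1 k3 a2 a5 x y R = -2*k1*a2/(a2*y-a5*x)^3 + k3*(a5/(R*(a2*y-a5*x)^2) - (a2*x+a5*y)*y/(R^3*(a2*y-a5*x)^2)
        - 2*a2*(a2*x+a5*y)/(R*(a2*y-a5*x)^3))"

lemma V5x:
  assumes R: "rad x y \<noteq> 0" and d: "a2*y - a5*x \<noteq> 0"
  shows "((\<lambda>u. V5 k1 k3 a2 a5 u y) has_real_derivative Vx k1 k3 a2 a5 x y (rad x y)) (at x)"
proof -
  have d': "a2*y \<noteq> a5*x" using d by simp
  show ?thesis unfolding V5_def Vx_def
  apply (rule derivative_eq_intros refl | (simp add: d d' R; fail))+
  using R d by (simp add: field_simps) algebra
qed

lemma V5y:
  assumes R: "rad x y \<noteq> 0" and d: "a2*y - a5*x \<noteq> 0"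
  shows "((\<lambda>v. V5 k1 k3 a2 a5 x v) has_real_derivative Vy k1 k3 a2 a5 x y (rad x y)) (at y)"
proof -
  have d': "a2*y \<noteq> a5*x" using d by simp
  show ?thesis unfolding V5_def Vy_def
  apply (rule derivative_eq_intros refl | (simp add: d d' R; fail))+
  using R d by (simp add: field_simps) algebra
qed

lemma acc_p:
  fixes x y R :: real
  assumes R: "R \<noteq> 0" and d: "a2*y - a5*x \<noteq> 0" and R2: "R^2 = x^2 + y^2"
  shows "a2*(- Vx k1 k3 a2 a5 x y R) + a5*(- Vy k1 k3 a2 a5 x y R) = -k3/R^3"
proof -
  define D where "D = a2*y - a5*x"
  have hD: "a2*y - a5*x = D" unfolding D_def ..
  have D0: "D \<noteq> 0" using d hD by simp
  show ?thesis unfolding Vx_def Vy_def hD using R D0 apply (simp add: field_simps)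
    using R2 hD by algebra
qed

lemma acc_q:
  fixes x y R :: real
  assumes R: "R \<noteq> 0" and d: "a2*y - a5*x \<noteq> 0" and R2: "R^2 = x^2 + y^2"
  shows "a2*(- Vy k1 k3 a2 a5 x y R) - a5*(- Vx k1 k3 a2 a5 x y R) =
     2*k1*(a2^2+a5^2)/(a2*y-a5*x)^3 + k3*(a2*x+a5*y)/(R^3*(a2*y-a5*x))
       + 2*(a2^2+a5^2)*k3*(a2*x+a5*y)/(R*(a2*y-a5*x)^3)"
proof -
  define D where "D = a2*y - a5*x"
  have hD: "a2*y - a5*x = D" unfolding D_def ..
  have D0: "D \<noteq> 0" using d hD by simp
  show ?thesis unfolding Vx_def Vy_def hD using R D0 apply (simp add: field_simps)
    using R2 hD by algebra
qed

lemma acc_L: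
  fixes x y R :: real
  assumes R: "R \<noteq> 0" and d: "a2*y - a5*x \<noteq> 0" and R2: "R^2 = x^2 + y^2"
  shows "x*(- Vy k1 k3 a2 a5 x y R) - y*(- Vx k1 k3 a2 a5 x y R) =
     2*k1*(a2*x+a5*y)/(a2*y-a5*x)^3 + k3/(R*(a2*y-a5*x)) + 2*k3*(a2*x+a5*y)^2/(R*(a2*y-a5*x)^3)"
proof -
  define D where "D = a2*y - a5*x"
  have hD: "a2*y - a5*x = D" unfolding D_def ..
  have D0: "D \<noteq> 0" using d hD by simp
  show ?thesis unfolding Vx_def Vy_def hD using R D0 apply (simp add: field_simps)
    using R2 hD by algebra
qed

definition Gf :: "real \<Rightarrow> real \<Rightarrow> real \<Rightarrow> real \<Rightarrow> real \<Rightarrow> real \<Rightarrow> real \<Rightarrow> real \<Rightarrow> real" where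
  "Gf k1 k3 LL pp qq ss dd RR = LL^2 * pp + 2*k1*RR^2/dd^2*pp + k3*RR/dd*qq - k3* ss/(RR*dd)*LL + 2*k3* ss*RR/dd^2*pp"

definition Kf :: "real \<Rightarrow> real \<Rightarrow> real \<Rightarrow> real \<Rightarrow> real \<Rightarrow> real \<Rightarrow> real" where
  "Kf k1 k3 LL ss dd RR = ss*LL^2 + 2*k1*RR^2* ss/dd^2 + 2*k3*RR* ss^2/dd^2 + k3*RR"

lemma J3t_Gf: "J3t k1 k3 a2 a5 x y xd yd = Gf k1 k3 (x*yd - y*xd) (a2*xd + a5*yd) (a2*yd - a5*xd) (a2*x + a5*y) (a2*y - a5*x) (rad x y)"
  unfolding J3t_def Gf_def by simp

lemma J5_Kf: "J5 k1 k3 a2 a5 t x y xd yd = - t * J3t k1 k3 a2 a5 x y xd yd + Kf k1 k3 (x*yd - y*xd) (a2*x + a5*y) (a2*y - a5*x) (rad x y)"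
  unfolding J5_def Kf_def by simp

locale flowpt =
  fixes k1 k3 A t :: real and Lf Pf Qf Sf Df Rf :: "real \<Rightarrow> real"
  assumes hL: "(Lf has_real_derivative (2*k1*Sf t/Df t^3 + k3/(Rf t*Df t) + 2*k3*Sf t^2/(Rf t*Df t^3))) (at t)"
  and hP: "(Pf has_real_derivative -k3/Rf t^3) (at t)"
  and hQ: "(Qf has_real_derivative (2*k1*A/Df t^3 + k3*Sf t/(Rf t^3*Df t) + 2*A*k3*Sf t/(Rf t*Df t^3))) (at t)"
  and hS: "(Sf has_real_derivative Pf t) (at t)"
  and hD: "(Df has_real_derivative Qf t) (at t)"
  and hR: "(Rf has_real_derivative (Sf t*Pf t + Df t*Qf t)/(A*Rf t)) (at t)"
  and R0: "Rf t \<noteq> 0" and D0: "Df t \<noteq> 0" and A0: "A \<noteq> 0"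
  and rel1: "A*Lf t = Sf t*Qf t - Df t*Pf t" and rel2: "A*(Rf t)^2 = (Sf t)^2 + (Df t)^2"
begin

lemma G_zero: "((\<lambda>t. Gf k1 k3 (Lf t) (Pf t) (Qf t) (Sf t) (Df t) (Rf t)) has_real_derivative 0) (at t)"
  unfolding Gf_def
  apply (rule derivative_eq_intros refl hL hP hQ hS hD hR | (simp add: R0 D0; fail))+
  using R0 D0 A0 apply (simp add: field_simps)
  using rel1 rel2 by algebra

lemma K_deriv: "((\<lambda>t. Kf k1 k3 (Lf t) (Sf t) (Df t) (Rf t)) has_real_derivative Gf k1 k3 (Lf t) (Pf t) (Qf t) (Sf t) (Df t) (Rf t)) (at t)"
  unfolding Gf_def Kf_def
  apply (rule derivative_eq_intros refl hL hP hQ hS hD hR | (simp add: R0 D0; fail))+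
  using R0 D0 A0 apply (simp add: field_simps)
  using rel1 rel2 by algebra


end

theorem mainTheorem7:
  fixes k1 k3 a2 a5 :: real
    and I :: "real set"
    and x y xd yd xdd ydd :: "real \<Rightarrow> real"
  assumes a_nz: "(a2, a5) \<noteq> (0, 0)"
    and I_open: "open I" and I_conn: "connected I"
    and region: "\<And>t. t \<in> I \<Longrightarrow> rad (x t) (y t) \<noteq> 0 \<and> a2 * y t - a5 * x t \<noteq> 0"
    and dx: "\<And>t. t \<in> I \<Longrightarrow> (x has_real_derivative xd t) (at t)"
    and dy: "\<And>t. t \<in> I \<Longrightarrow> (y has_real_derivative yd t) (at t)"
    and dxd: "\<And>t. t \<in> I \<Longrightarrow> (xd has_real_derivative xdd t) (at t)"
    and dyd: "\<And>t. t \<in> I \<Longrightarrow> (yd has_real_derivative ydd t) (at t)"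
    and eqx: "\<And>t. t \<in> I \<Longrightarrow>
              ((\<lambda>u. V5 k1 k3 a2 a5 u (y t)) has_real_derivative (- xdd t)) (at (x t))"
    and eqy: "\<And>t. t \<in> I \<Longrightarrow>
              ((\<lambda>v. V5 k1 k3 a2 a5 (x t) v) has_real_derivative (- ydd t)) (at (y t))"
  shows "(\<exists>c. \<forall>t\<in>I. J5 k1 k3 a2 a5 t (x t) (y t) (xd t) (yd t) = c)
       \<and> (\<exists>c. \<forall>t\<in>I. J3t k1 k3 a2 a5 (x t) (y t) (xd t) (yd t) = c)"
proof -
  define A where "A = a2^2 + a5^2"
  have A0: "A \<noteq> 0" using a_nz unfolding A_def by (auto simp: sum_power2_eq_zero_iff)
  have key: "((\<lambda>t. J3t k1 k3 a2 a5 (x t) (y t) (xd t) (yd t)) has_real_derivative 0) (at t)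
     \<and> ((\<lambda>t. J5 k1 k3 a2 a5 t (x t) (y t) (xd t) (yd t)) has_real_derivative 0) (at t)"
    if t: "t \<in> I" for t
  proof -
    have R0: "rad (x t) (y t) \<noteq> 0" and d0: "a2 * y t - a5 * x t \<noteq> 0" using region[OF t] by auto
    have R2: "(rad (x t) (y t))^2 = (x t)^2 + (y t)^2" by (rule rad_sq)
    have exx: "xdd t = - Vx k1 k3 a2 a5 (x t) (y t) (rad (x t) (y t))"
      using DERIV_unique[OF eqx[OF t] V5x[OF R0 d0]] by simp
    have eyy: "ydd t = - Vy k1 k3 a2 a5 (x t) (y t) (rad (x t) (y t))"
      using DERIV_unique[OF eqy[OF t] V5y[OF R0 d0]] by simp
    note dx = dx[OF t] and dy = dy[OF t] and dxd = dxd[OF t] and dyd = dyd[OF t]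
    have hS: "((\<lambda>t. a2 * x t + a5 * y t) has_real_derivative (a2 * xd t + a5 * yd t)) (at t)"
      by (auto intro!: derivative_eq_intros dx dy)
    have hD: "((\<lambda>t. a2 * y t - a5 * x t) has_real_derivative (a2 * yd t - a5 * xd t)) (at t)"
      by (auto intro!: derivative_eq_intros dx dy)
    have hP0: "((\<lambda>t. a2 * xd t + a5 * yd t) has_real_derivative (a2 * xdd t + a5 * ydd t)) (at t)"
      by (auto intro!: derivative_eq_intros dxd dyd)
    have hP: "((\<lambda>t. a2 * xd t + a5 * yd t) has_real_derivative - k3 / (rad (x t) (y t))^3) (at t)"
      using hP0 acc_p[OF R0 d0 R2, of k1 k3] unfolding exx eyy by simp
    have hQ0: "((\<lambda>t. a2 * yd t - a5 * xd t) has_real_derivative (a2 * ydd t - a5 * xdd t)) (at t)"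
      by (auto intro!: derivative_eq_intros dxd dyd)
    have hQ: "((\<lambda>t. a2 * yd t - a5 * xd t) has_real_derivative
       (2*k1*A/(a2 * y t - a5 * x t)^3 + k3*(a2 * x t + a5 * y t)/((rad (x t) (y t))^3*(a2 * y t - a5 * x t))
        + 2*A*k3*(a2 * x t + a5 * y t)/((rad (x t) (y t))*(a2 * y t - a5 * x t)^3))) (at t)"
      using hQ0 acc_q[OF R0 d0 R2, of k1 k3] unfolding exx eyy A_def by (simp add: mult.commute mult.left_commute)
    have hL0: "((\<lambda>t. x t * yd t - y t * xd t) has_real_derivative (x t * ydd t - y t * xdd t)) (at t)"
      by (auto intro!: derivative_eq_intros dx dy dxd dyd simp: algebra_simps)
    have hL: "((\<lambda>t. x t * yd t - y t * xd t) has_real_derivative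
       (2*k1*(a2 * x t + a5 * y t)/(a2 * y t - a5 * x t)^3 + k3/((rad (x t) (y t))*(a2 * y t - a5 * x t))
        + 2*k3*(a2 * x t + a5 * y t)^2/((rad (x t) (y t))*(a2 * y t - a5 * x t)^3))) (at t)"
      using hL0 acc_L[OF R0 d0 R2, of k1 k3] unfolding exx eyy by simp
    have hR0: "((\<lambda>t. rad (x t) (y t)) has_real_derivative (x t * xd t + y t * yd t) / rad (x t) (y t)) (at t)"
      by (rule rad_deriv[OF dx dy R0 refl])
    have eR: "(x t * xd t + y t * yd t) / rad (x t) (y t) =
       ((a2 * x t + a5 * y t) * (a2 * xd t + a5 * yd t) + (a2 * y t - a5 * x t) * (a2 * yd t - a5 * xd t)) / (A * rad (x t) (y t))"
    proof -
      have num: "(a2 * x t + a5 * y t) * (a2 * xd t + a5 * yd t) + (a2 * y t - a5 * x t) * (a2 * yd t - a5 * xd t)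
         = A * (x t * xd t + y t * yd t)"
        unfolding A_def by (simp add: algebra_simps power2_eq_square)
      show ?thesis unfolding num using A0 by simp
    qed
    have hR: "((\<lambda>t. rad (x t) (y t)) has_real_derivative
       ((a2 * x t + a5 * y t) * (a2 * xd t + a5 * yd t) + (a2 * y t - a5 * x t) * (a2 * yd t - a5 * xd t)) / (A * rad (x t) (y t))) (at t)"
      using hR0 unfolding eR .
    have rel1: "A * (x t * yd t - y t * xd t) = (a2 * x t + a5 * y t) * (a2 * yd t - a5 * xd t) - (a2 * y t - a5 * x t) * (a2 * xd t + a5 * yd t)"
      unfolding A_def by (simp add: algebra_simps power2_eq_square)
    have rel2: "A * (rad (x t) (y t))^2 = (a2 * x t + a5 * y t)^2 + (a2 * y t - a5 * x t)^2"
      unfolding R2 A_def by (simp add: algebra_simps power2_eq_square)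
    interpret fp: flowpt k1 k3 A t "\<lambda>t. x t * yd t - y t * xd t" "\<lambda>t. a2 * xd t + a5 * yd t"
      "\<lambda>t. a2 * yd t - a5 * xd t" "\<lambda>t. a2 * x t + a5 * y t" "\<lambda>t. a2 * y t - a5 * x t" "\<lambda>t. rad (x t) (y t)"
      by unfold_locales (use hL hP hQ hS hD hR R0 d0 A0 rel1 rel2 in auto)
    have G0: "((\<lambda>t. J3t k1 k3 a2 a5 (x t) (y t) (xd t) (yd t)) has_real_derivative 0) (at t)"
      unfolding J3t_Gf by (rule fp.G_zero)
    have K1: "((\<lambda>t. Kf k1 k3 (x t * yd t - y t * xd t) (a2 * x t + a5 * y t) (a2 * y t - a5 * x t) (rad (x t) (y t)))
       has_real_derivative J3t k1 k3 a2 a5 (x t) (y t) (xd t) (yd t)) (at t)"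
      unfolding J3t_Gf by (rule fp.K_deriv)
    have J5D: "((\<lambda>t. J5 k1 k3 a2 a5 t (x t) (y t) (xd t) (yd t)) has_real_derivative 0) (at t)"
      unfolding J5_Kf
      by (rule derivative_eq_intros refl G0 K1 | simp)+
    show ?thesis using G0 J5D by blast
  qed
  have c5: "(\<lambda>t. J5 k1 k3 a2 a5 t (x t) (y t) (xd t) (yd t)) constant_on I"
    by (rule has_field_derivative_0_imp_constant_on[OF _ I_conn I_open]) (use key in blast)
  have c3: "(\<lambda>t. J3t k1 k3 a2 a5 (x t) (y t) (xd t) (yd t)) constant_on I"
    by (rule has_field_derivative_0_imp_constant_on[OF _ I_conn I_open]) (use key in blast)
  show ?thesis using c5 c3 unfolding constant_on_def by blast
qed

end
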